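(* Let $p$ be an odd prime, $R=F_p+vF_p$ with $v^2=v$, and let $\vartheta=1-2v$ or $\vartheta=-1+2v$. A linear code $C$ of length $n$ over $R$ is a $\vartheta$-constacyclic code if and only if $\phi_\vartheta(C)$ is a cyclic code of length $2n$ over $F_p$.
   Context: A linear code of length $n$ over $R$ is an $R$-submodule of $R^n$; it is $\vartheta$-constacyclic if $(c_0,\dots,c_{n-1})\in C$ implies $(\vartheta c_{n-1},c_0,\dots,c_{n-2})\in C$. A cyclic code over $F_p$ is a linear code closed under the cyclic shift. Write $\vartheta=\lambda+v\mu$ with $\lambda,\mu\in F_p$. The Gray map $\phi_\vartheta:R^n\to F_p^{2n}$ is defined for $c=(c_0,\dots,c_{n-1})$ with $c_i=r_i+vq_i$ ($r_i,q_i\in F_p$) by $\phi_\vartheta(c)=(\lambda(\lambda+\mu)q_0,\dots,\lambda(\lambda+\mu)q_{n-1},\,-\mu r_0-(\lambda+\mu)q_0,\dots,-\mu r_{n-1}-(\lambda+\mu)q_{n-1})$. *)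

theory Defs
  imports "HOL-Computational_Algebra.Primes"
begin

text \<open>Elements of F_p are represented by integers in {0..<p}.
  Elements r + v q of R = F_p + v F_p (v^2 = v) are represented by pairs (r, q).
  Words of length n are lists of length n.\<close>

definition Fp_elems :: "int \<Rightarrow> int set" where
  "Fp_elems p = {x. 0 \<le> x \<and> x < p}"

definition R_elems :: "int \<Rightarrow> (int \<times> int) set" where
  "R_elems p = Fp_elems p \<times> Fp_elems p"

definition R_add :: "int \<Rightarrow> int \<times> int \<Rightarrow> int \<times> int \<Rightarrow> int \<times> int" where
  "R_add p x y = ((fst x + fst y) mod p, (snd x + snd y) mod p)"

text \<open>(a + v b)(c + v d) = ac + v(ad + bc + bd), using v^2 = v.\<close>
definition R_mult :: "int \<Rightarrow> int \<times> int \<Rightarrow> int \<times> int \<Rightarrow> int \<times> int" where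
  "R_mult p x y = ((fst x * fst y) mod p,
                   (fst x * snd y + snd x * fst y + snd x * snd y) mod p)"

definition Fp_vecs :: "int \<Rightarrow> nat \<Rightarrow> int list set" where
  "Fp_vecs p n = {xs. length xs = n \<and> set xs \<subseteq> Fp_elems p}"

definition R_vecs :: "int \<Rightarrow> nat \<Rightarrow> (int \<times> int) list set" where
  "R_vecs p n = {xs. length xs = n \<and> set xs \<subseteq> R_elems p}"

definition linear_code_Fp :: "int \<Rightarrow> nat \<Rightarrow> int list set \<Rightarrow> bool" where
  "linear_code_Fp p n C \<longleftrightarrow>
     C \<subseteq> Fp_vecs p n \<and> replicate n 0 \<in> C \<and>
     (\<forall>x\<in>C. \<forall>y\<in>C. map2 (\<lambda>a b. (a + b) mod p) x y \<in> C) \<and>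
     (\<forall>a\<in>Fp_elems p. \<forall>x\<in>C. map (\<lambda>b. (a * b) mod p) x \<in> C)"

definition linear_code_R :: "int \<Rightarrow> nat \<Rightarrow> (int \<times> int) list set \<Rightarrow> bool" where
  "linear_code_R p n C \<longleftrightarrow>
     C \<subseteq> R_vecs p n \<and> replicate n (0, 0) \<in> C \<and>
     (\<forall>x\<in>C. \<forall>y\<in>C. map2 (R_add p) x y \<in> C) \<and>
     (\<forall>a\<in>R_elems p. \<forall>x\<in>C. map (R_mult p a) x \<in> C)"

definition cyclic_code_Fp :: "int \<Rightarrow> nat \<Rightarrow> int list set \<Rightarrow> bool" where
  "cyclic_code_Fp p n C \<longleftrightarrow> linear_code_Fp p n C \<and>
     (\<forall>c\<in>C. c \<noteq> [] \<longrightarrow> last c # butlast c \<in> C)"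

definition constacyclic_R :: "int \<Rightarrow> int \<times> int \<Rightarrow> (int \<times> int) list set \<Rightarrow> bool" where
  "constacyclic_R p \<theta> C \<longleftrightarrow>
     (\<forall>c\<in>C. c \<noteq> [] \<longrightarrow> R_mult p \<theta> (last c) # butlast c \<in> C)"

definition gray :: "int \<Rightarrow> int \<times> int \<Rightarrow> (int \<times> int) list \<Rightarrow> int list" where
  "gray p \<theta> c =
     (let l = fst \<theta>; m = snd \<theta> in
      map (\<lambda>(r, q). (l * (l + m) * q) mod p) c @
      map (\<lambda>(r, q). (- m * r - (l + m) * q) mod p) c)"

end

theory Submission
  imports Defs
begin

lemma gray_K:
  assumes "K1 = fst t * (fst t + snd t)" "K2 = - snd t" "K3 = - (fst t + snd t)"
  shows "gray p t c = map (\<lambda>x. (K1 * snd x) mod p) c @ map (\<lambda>x. (K2 * fst x + K3 * snd x) mod p) c"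
  unfolding gray_def Let_def assms by (simp add: case_prod_beta algebra_simps)

lemma L2: "((a::int)*(x mod p) + b*(y mod p)) mod p = (a*x+b*y) mod p"
  by (metis mod_add_eq mod_mult_right_eq)

lemma P1: "((K::int)*((a+b) mod p)) mod p = ((K*a) mod p + (K*b) mod p) mod p"
  by (simp add: mod_mult_right_eq mod_add_eq distrib_left)
lemma P2: "((A::int)*((a+b) mod p) + B*((c+d) mod p)) mod p = ((A*a + B*c) mod p + (A*b+B*d) mod p) mod p"
  by (simp add: L2 mod_add_eq algebra_simps)
lemma P3: "((K::int)*((a*b) mod p)) mod p = (a*((K*b) mod p)) mod p"
  by (simp add: mod_mult_right_eq algebra_simps)
lemma P4: "((A::int)*((a*x) mod p) + B*((a*y) mod p)) mod p = (a*((A*x+B*y) mod p)) mod p"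
  by (simp add: L2 mod_mult_right_eq algebra_simps)

lemma gray_len[simp]: "length (gray p t c) = 2 * length c"
  by (simp add: gray_def Let_def)

lemma gray_add:
  assumes "length x = length y"
  shows "gray p t (map2 (R_add p) x y) = map2 (\<lambda>a b. (a+b) mod p) (gray p t x) (gray p t y)"
proof -
  define K1 K2 K3 where "K1 = fst t * (fst t + snd t)" and "K2 = - snd t" and "K3 = - (fst t + snd t)"
  have g: "\<And>c. gray p t c = map (\<lambda>x. (K1 * snd x) mod p) c @ map (\<lambda>x. (K2 * fst x + K3 * snd x) mod p) c"
    by (rule gray_K) (simp_all add: K1_def K2_def K3_def)
  show ?thesis
  proof (rule nth_equalityI)
    show "length (gray p t (map2 (R_add p) x y)) = length (map2 (\<lambda>a b. (a+b) mod p) (gray p t x) (gray p t y))"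
      using assms by simp
    fix i assume "i < length (gray p t (map2 (R_add p) x y))"
    then show "gray p t (map2 (R_add p) x y) ! i = map2 (\<lambda>a b. (a+b) mod p) (gray p t x) (gray p t y) ! i"
      using assms unfolding g
      by (auto simp: nth_append R_add_def P1 P2)
  qed
qed

lemma gray_smult:
  shows "map (\<lambda>b. (a*b) mod p) (gray p t x) = gray p t (map (R_mult p (a,0)) x)"
proof -
  define K1 K2 K3 where "K1 = fst t * (fst t + snd t)" and "K2 = - snd t" and "K3 = - (fst t + snd t)"
  have g: "\<And>c. gray p t c = map (\<lambda>x. (K1 * snd x) mod p) c @ map (\<lambda>x. (K2 * fst x + K3 * snd x) mod p) c"
    by (rule gray_K) (simp_all add: K1_def K2_def K3_def)
  show ?thesis unfolding g
  by (auto simp: R_mult_def P3 P4)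
qed

lemma gray_shift:
  assumes gray_eq: "\<And>c. gray p t c = map f1 c @ map f2 c"
    and H1: "\<And>x. f1 (R_mult p t x) = f2 x" and H2: "\<And>x. f2 (R_mult p t x) = f1 x"
    and "c \<noteq> []"
  shows "gray p t (R_mult p t (last c) # butlast c) = last (gray p t c) # butlast (gray p t c)"
proof -
  have "map f1 c = map f1 (butlast c) @ [f1 (last c)]"
    using assms(4) by (metis append_butlast_last_id map_append list.simps(8,9))
  then show ?thesis using assms by (simp add: gray_eq butlast_append H1 H2 last_map map_butlast)
qed


lemma gray_range: "p > 0 \<Longrightarrow> set (gray p t c) \<subseteq> Fp_elems p"
  by (auto simp: gray_def Let_def Fp_elems_def)

lemma main:
  assumes p1: "p > 1"
    and g: "\<And>c. gray p t c = map f1 c @ map f2 c"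
    and H1: "\<And>x. f1 (R_mult p t x) = f2 x" and H2: "\<And>x. f2 (R_mult p t x) = f1 x"
    and inj: "\<And>x y. x \<in> R_elems p \<Longrightarrow> y \<in> R_elems p \<Longrightarrow> f1 x = f1 y \<Longrightarrow> f2 x = f2 y \<Longrightarrow> x = y"
    and lin: "linear_code_R p n C"
  shows "constacyclic_R p t C \<longleftrightarrow> cyclic_code_Fp p (2 * n) (gray p t ` C)"
proof -
  have CR: "C \<subseteq> R_vecs p n" and C0: "replicate n (0, 0) \<in> C"
    and Cadd: "\<And>x y. x\<in>C \<Longrightarrow> y\<in>C \<Longrightarrow> map2 (R_add p) x y \<in> C"
    and Cmul: "\<And>a x. a\<in>R_elems p \<Longrightarrow> x\<in>C \<Longrightarrow> map (R_mult p a) x \<in> C"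
    using lin unfolding linear_code_R_def by blast+
  have lenC: "\<And>c. c \<in> C \<Longrightarrow> length c = n" using CR by (auto simp: R_vecs_def)
  have ginj: "c = d" if "c \<in> C" "d \<in> C" "gray p t c = gray p t d" for c d
  proof -
    have l: "length c = length d" using that lenC by simp
    from that(3) l have m1: "map f1 c = map f1 d" and m2: "map f2 c = map f2 d"
      unfolding g by simp_all
    show ?thesis
    proof (rule nth_equalityI)
      show "length c = length d" by (rule l)
      fix i assume i: "i < length c"
      have "set c \<subseteq> R_elems p" "set d \<subseteq> R_elems p"
        using CR that(1,2) by (auto simp: R_vecs_def)
      then have "c ! i \<in> R_elems p" "d ! i \<in> R_elems p"
        using i l by (metis nth_mem subsetD)+
      moreover have "f1 (c ! i) = f1 (d ! i)" "f2 (c ! i) = f2 (d ! i)"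
        using m1 m2 i l by (metis nth_map)+
      ultimately show "c ! i = d ! i" using inj by blast
    qed
  qed
  have shift: "gray p t (R_mult p t (last c) # butlast c) = last (gray p t c) # butlast (gray p t c)"
    if "c \<noteq> []" for c
    by (rule gray_shift[OF g H1 H2 that])
  have linF: "linear_code_Fp p (2 * n) (gray p t ` C)"
    unfolding linear_code_Fp_def
  proof (intro conjI ballI)
    show "gray p t ` C \<subseteq> Fp_vecs p (2 * n)"
      using gray_range[of p t] p1 lenC by (auto simp: Fp_vecs_def)
    have "gray p t (replicate n (0, 0)) = replicate (2 * n) 0"
      by (simp add: gray_def Let_def mult_2 replicate_add)
    then show "replicate (2 * n) 0 \<in> gray p t ` C" using C0 by (metis image_eqI)
  next
    fix x y assume "x \<in> gray p t ` C" "y \<in> gray p t ` C"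
    then obtain c d where "c \<in> C" "d \<in> C" "x = gray p t c" "y = gray p t d" by blast
    then show "map2 (\<lambda>a b. (a + b) mod p) x y \<in> gray p t ` C"
      using gray_add[of c d p t] lenC Cadd by (metis image_eqI)
  next
    fix a x assume a: "a \<in> Fp_elems p" and "x \<in> gray p t ` C"
    then obtain c where c: "c \<in> C" "x = gray p t c" by blast
    have "(a, 0) \<in> R_elems p" using a p1 by (auto simp: R_elems_def Fp_elems_def)
    then show "map (\<lambda>b. (a * b) mod p) x \<in> gray p t ` C"
      using gray_smult[of a p t c] c Cmul by (metis image_eqI)
  qed
  have sh: "R_mult p t (last c) # butlast c \<in> C \<longleftrightarrow> last (gray p t c) # butlast (gray p t c) \<in> gray p t ` C"
    if c: "c \<in> C" "c \<noteq> []" for c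
  proof
    assume "R_mult p t (last c) # butlast c \<in> C"
    then show "last (gray p t c) # butlast (gray p t c) \<in> gray p t ` C"
      using shift[OF c(2)] by (metis image_eqI)
  next
    assume "last (gray p t c) # butlast (gray p t c) \<in> gray p t ` C"
    then obtain d where d: "d \<in> C" "gray p t d = gray p t (R_mult p t (last c) # butlast c)"
      using shift[OF c(2)] by auto
    have l: "length d = length (R_mult p t (last c) # butlast c)"
      using d(2) by (metis gray_len mult_cancel1 zero_neq_numeral)
    have "map f1 d = map f1 (R_mult p t (last c) # butlast c) \<and> map f2 d = map f2 (R_mult p t (last c) # butlast c)"
      using d(2) l unfolding g by (metis append_eq_append_conv length_map)
    have "d = R_mult p t (last c) # butlast c"
    proof (rule nth_equalityI)
      show "length d = length (R_mult p t (last c) # butlast c)" by (rule l)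
      fix i assume i: "i < length d"
      have cR: "set c \<subseteq> R_elems p" using CR c(1) by (auto simp: R_vecs_def)
      have tR: "R_mult p t (last c) \<in> R_elems p"
        using p1 by (auto simp: R_mult_def R_elems_def Fp_elems_def)
      have "set (R_mult p t (last c) # butlast c) \<subseteq> R_elems p"
        using cR tR by (auto dest: in_set_butlastD)
      then have "(R_mult p t (last c) # butlast c) ! i \<in> R_elems p" using i l by (metis nth_mem subsetD)
      moreover have "set d \<subseteq> R_elems p" using CR d(1) by (auto simp: R_vecs_def)
      then have "d ! i \<in> R_elems p" using i by (metis nth_mem subsetD)
      moreover have "f1 (d ! i) = f1 ((R_mult p t (last c) # butlast c) ! i)"
        "f2 (d ! i) = f2 ((R_mult p t (last c) # butlast c) ! i)"
        using \<open>map f1 d = _ \<and> _\<close> i l by (metis nth_map)+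
      ultimately show "d ! i = (R_mult p t (last c) # butlast c) ! i" using inj by blast
    qed
    then show "R_mult p t (last c) # butlast c \<in> C" using d(1) by simp
  qed
  show ?thesis
    unfolding constacyclic_R_def cyclic_code_Fp_def
  proof (intro iffI conjI ballI impI)
    fix x assume A: "\<forall>c\<in>C. c \<noteq> [] \<longrightarrow> R_mult p t (last c) # butlast c \<in> C"
      and x: "x \<in> gray p t ` C" and "x \<noteq> []"
    then obtain c where c: "c \<in> C" "x = gray p t c" by blast
    then have "c \<noteq> []" using \<open>x \<noteq> []\<close> by (auto simp: gray_def Let_def)
    then show "last x # butlast x \<in> gray p t ` C" using sh[OF c(1)] A c by blast
  next
    fix c assume B: "linear_code_Fp p (2 * n) (gray p t ` C) \<and> (\<forall>c\<in>gray p t ` C. c \<noteq> [] \<longrightarrow> last c # butlast c \<in> gray p t ` C)"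
      and c: "c \<in> C" "c \<noteq> []"
    have "gray p t c \<noteq> []" using c(2) by (auto simp: gray_def Let_def)
    then show "R_mult p t (last c) # butlast c \<in> C" using sh[OF c] B c by blast
  qed (rule linF)
qed


lemma modeq_by: "(A::int) - B = p * w \<Longrightarrow> A mod p = B mod p"
  by (simp add: mod_eq_dvd_iff)

lemma range_eq: "(0::int) \<le> a \<Longrightarrow> a < p \<Longrightarrow> 0 \<le> b \<Longrightarrow> b < p \<Longrightarrow> p dvd a - b \<Longrightarrow> a = b"
  by (metis mod_eq_dvd_iff mod_pos_pos_trivial)

lemma dvd_reduce: "(p::int) dvd A * z \<Longrightarrow> A - K = p * m \<Longrightarrow> p dvd K * z"
proof -
  assume a: "p dvd A * z" and b: "A - K = p * m"
  have "K * z = A * z - p * (m * z)" using b by (simp add: algebra_simps)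
  then show ?thesis using a by simp
qed

lemma modeq_dvd: "(K * (a::int)) mod p = (K * b) mod p \<Longrightarrow> p dvd K * (a - b)"
  by (simp add: mod_eq_dvd_iff right_diff_distrib)

lemma modeq_dvd2: "(K * (a::int) + L * c) mod p = (K * b + L * c) mod p \<Longrightarrow> p dvd K * (a - b)"
  by (simp add: mod_eq_dvd_iff right_diff_distrib)

lemma inj_gen:
  assumes "prime p" "odd p"
    and x: "x \<in> R_elems p" and y: "y \<in> R_elems p"
    and e1: "(K1 * snd x) mod p = (K1 * snd y) mod p"
    and e2: "(K2 * fst x + K3 * snd x) mod p = (K2 * fst y + K3 * snd y) mod p"
    and k1: "K1 - (-1) = p * m1" and k2: "K2 - 2 * s = p * m2" and s: "s = 1 \<or> s = -1"
  shows "x = y"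
proof -
  have p2: "\<not> p dvd 2"
  proof
    assume "p dvd 2"
    then have "p \<le> 2" by (simp add: zdvd_imp_le)
    moreover have "p \<ge> 2" using assms(1) prime_ge_2_int by blast
    ultimately show False using assms(2) by (metis order_antisym even_numeral)
  qed
  have "p dvd K1 * (snd x - snd y)" using e1 by (rule modeq_dvd)
  then have "p dvd (-1) * (snd x - snd y)" using k1 by (rule dvd_reduce)
  then have "p dvd snd x - snd y" by (metis dvd_minus_iff minus_diff_eq mult_minus1)
  then have q: "snd x = snd y" using x y by (intro range_eq) (auto simp: R_elems_def Fp_elems_def)
  then have "p dvd K2 * (fst x - fst y)" using e2 by (intro modeq_dvd2[of _ _ K3 "snd y"]) simp
  then have "p dvd (2 * s) * (fst x - fst y)" using k2 by (rule dvd_reduce)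
  then have "p dvd 2 * (fst x - fst y)" using s
    by (metis dvd_minus_iff mult.assoc mult_minus1 mult.commute mult_1)
  then have "p dvd fst x - fst y" using p2 assms(1) prime_dvd_mult_iff[of p 2 "fst x - fst y"] by blast
  then have "fst x = fst y" using x y by (intro range_eq) (auto simp: R_elems_def Fp_elems_def)
  with q show ?thesis by (simp add: prod_eq_iff)
qed

lemma case1:
  assumes "prime p" "odd p" "linear_code_R p n C"
  shows "constacyclic_R p (1, p - 2) C \<longleftrightarrow> cyclic_code_Fp p (2 * n) (gray p (1, p - 2) ` C)"
proof (rule main[where ?f1.0 = "\<lambda>x. ((p - 1) * snd x) mod p" and ?f2.0 = "\<lambda>x. ((2 - p) * fst x + (1 - p) * snd x) mod p"])
  show "p > 1" using assms(1) prime_gt_1_int by blast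
  show "gray p (1, p - 2) c = map (\<lambda>x. ((p - 1) * snd x) mod p) c @ map (\<lambda>x. ((2 - p) * fst x + (1 - p) * snd x) mod p) c" for c
    by (rule gray_K) simp_all
  show "((p - 1) * snd (R_mult p (1, p - 2) x)) mod p = ((2 - p) * fst x + (1 - p) * snd x) mod p" for x
    unfolding R_mult_def fst_conv snd_conv mod_mult_right_eq
    by (rule modeq_by[where w = "(p-1)*snd x + (p-2)*fst x"]) (simp add: algebra_simps)
  show "((2 - p) * fst (R_mult p (1, p - 2) x) + (1 - p) * snd (R_mult p (1, p - 2) x)) mod p = ((p - 1) * snd x) mod p" for x
    unfolding R_mult_def fst_conv snd_conv L2
    by (rule modeq_by[where w = "(2-p)*fst x - (p-1)*snd x"]) (simp add: algebra_simps)
  show "x = y" if "x \<in> R_elems p" "y \<in> R_elems p" "((p - 1) * snd x) mod p = ((p - 1) * snd y) mod p"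
    "((2 - p) * fst x + (1 - p) * snd x) mod p = ((2 - p) * fst y + (1 - p) * snd y) mod p" for x y
    using inj_gen[OF assms(1,2) that, of 1 1 "-1"] by simp
qed (rule assms(3))

lemma case2:
  assumes "prime p" "odd p" "linear_code_R p n C"
  shows "constacyclic_R p (p - 1, 2) C \<longleftrightarrow> cyclic_code_Fp p (2 * n) (gray p (p - 1, 2) ` C)"
proof (rule main[where ?f1.0 = "\<lambda>x. ((p - 1) * (p + 1) * snd x) mod p" and ?f2.0 = "\<lambda>x. ((-2) * fst x + (- (p + 1)) * snd x) mod p"])
  show "p > 1" using assms(1) prime_gt_1_int by blast
  show "gray p (p - 1, 2) c = map (\<lambda>x. ((p - 1) * (p + 1) * snd x) mod p) c @ map (\<lambda>x. ((-2) * fst x + (- (p + 1)) * snd x) mod p) c" for c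
    by (rule gray_K) (simp_all add: algebra_simps)
  show "((p - 1) * (p + 1) * snd (R_mult p (p - 1, 2) x)) mod p = ((-2) * fst x + (- (p + 1)) * snd x) mod p" for x
    unfolding R_mult_def fst_conv snd_conv mod_mult_right_eq
    by (rule modeq_by[where w = "p*((p+1)*snd x + 2*fst x)"]) (simp add: algebra_simps)
  show "((-2) * fst (R_mult p (p - 1, 2) x) + (- (p + 1)) * snd (R_mult p (p - 1, 2) x)) mod p = ((p - 1) * (p + 1) * snd x) mod p" for x
    unfolding R_mult_def fst_conv snd_conv L2
    by (rule modeq_by[where w = "-4*fst x - 2*(p+1)*snd x"]) (simp add: algebra_simps)
  show "x = y" if "x \<in> R_elems p" "y \<in> R_elems p" "((p - 1) * (p + 1) * snd x) mod p = ((p - 1) * (p + 1) * snd y) mod p"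
    "((-2) * fst x + (- (p + 1)) * snd x) mod p = ((-2) * fst y + (- (p + 1)) * snd y) mod p" for x y
    using inj_gen[OF assms(1,2) that, of p "-1" 0] by (simp add: algebra_simps)
qed (rule assms(3))

theorem theorem3p13:
  fixes p :: int and n :: nat and \<theta> :: "int \<times> int"
    and C :: "(int \<times> int) list set"
  assumes "prime p" and "odd p"
    and "\<theta> = (1, (-2) mod p) \<or> \<theta> = ((-1) mod p, 2)"
    and "linear_code_R p n C"
  shows "constacyclic_R p \<theta> C \<longleftrightarrow> cyclic_code_Fp p (2 * n) (gray p \<theta> ` C)"
proof -
  have p2: "p \<ge> 2" using assms(1) prime_ge_2_int by blast
  have "p \<noteq> 2" using assms(2) by auto
  then have p3: "p \<ge> 3" using p2 by simp
  have m2: "(-2) mod p = p - 2"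
  proof -
    have "(-2) mod p = (p - 2) mod p" by (rule modeq_by[where w = "-1"]) simp
    also have "\<dots> = p - 2" by (rule mod_pos_pos_trivial) (use p3 in auto)
    finally show ?thesis .
  qed
  have m1: "(-1) mod p = p - 1"
  proof -
    have "(-1) mod p = (p - 1) mod p" by (rule modeq_by[where w = "-1"]) simp
    also have "\<dots> = p - 1" by (rule mod_pos_pos_trivial) (use p3 in auto)
    finally show ?thesis .
  qed
  from assms(3) show ?thesis
    unfolding m1 m2
    using case1[OF assms(1,2,4)] case2[OF assms(1,2,4)] by auto
qed

end
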